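(* Let $P$ be a finite poset with $P \in \mathcal{N}_2$. Then every convex subposet $Q$ of $P$ (a subset $Q\subseteq P$ such that $x\le z\le y$ with $x,y\in Q$ implies $z\in Q$, with the induced order) also belongs to $\mathcal{N}_2$.
   Context: All posets are finite. An edge of a poset is a covering relation $x \lessdot y$. A chain cover of a poset $P$ is a set of pairwise disjoint saturated chains whose union is $P$. A labeling of $P$ is a map $\lambda:P\to\mathbb{R}$. For a chain cover $\mathcal{C}$, $\mathcal{C}$-sorting a labeling means: for each chain $\bm{c}\in\mathcal{C}$, permute the labels $\{\lambda(v): v\in \bm{c}\}$ among the elements of $\bm{c}$ so that they are non-decreasing from the minimum of $\bm{c}$ to its maximum. A finite poset $P$ has the non-messing-up property, written $P\in\mathcal{N}_2$ (via $\{\mathcal{C}_1,\mathcal{C}_2\}$), if there exists an unordered pair of chain covers $\{\mathcal{C}_1,\mathcal{C}_2\}$ of $P$ such that (1) for every labeling of $P$ and for $i=1$ and $i=2$, first $\mathcal{C}_i$-sorting and then $\mathcal{C}_{3-i}$-sorting leaves the labels non-decreasing along every chain of $\mathcal{C}_i$; and (2) every edge of $P$ is contained in some chain of $\mathcal{C}_1$ or of $\mathcal{C}_2$. *)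

theory Defs
  imports Complex_Main "HOL-Library.Multiset"
begin

definition is_poset :: "'a set \<Rightarrow> ('a \<Rightarrow> 'a \<Rightarrow> bool) \<Rightarrow> bool" where
  "is_poset P le \<longleftrightarrow>
     (\<forall>x\<in>P. le x x) \<and>
     (\<forall>x\<in>P. \<forall>y\<in>P. le x y \<and> le y x \<longrightarrow> x = y) \<and>
     (\<forall>x\<in>P. \<forall>y\<in>P. \<forall>z\<in>P. le x y \<and> le y z \<longrightarrow> le x z)"

definition covers :: "'a set \<Rightarrow> ('a \<Rightarrow> 'a \<Rightarrow> bool) \<Rightarrow> 'a \<Rightarrow> 'a \<Rightarrow> bool" where
  "covers P le x y \<longleftrightarrow> x \<in> P \<and> y \<in> P \<and> le x y \<and> x \<noteq> y \<and>
     \<not> (\<exists>z\<in>P. le x z \<and> le z y \<and> z \<noteq> x \<and> z \<noteq> y)"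

definition saturated_chain :: "'a set \<Rightarrow> ('a \<Rightarrow> 'a \<Rightarrow> bool) \<Rightarrow> 'a set \<Rightarrow> bool" where
  "saturated_chain P le c \<longleftrightarrow> c \<noteq> {} \<and> c \<subseteq> P \<and>
     (\<forall>x\<in>c. \<forall>y\<in>c. le x y \<or> le y x) \<and>
     (\<forall>x\<in>c. \<forall>y\<in>c. le x y \<and> x \<noteq> y \<and>
        \<not> (\<exists>z\<in>c. le x z \<and> le z y \<and> z \<noteq> x \<and> z \<noteq> y) \<longrightarrow> covers P le x y)"

definition chain_cover :: "'a set \<Rightarrow> ('a \<Rightarrow> 'a \<Rightarrow> bool) \<Rightarrow> 'a set set \<Rightarrow> bool" where
  "chain_cover P le C \<longleftrightarrow> (\<forall>c\<in>C. saturated_chain P le c) \<and>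
     (\<forall>c\<in>C. \<forall>d\<in>C. c \<noteq> d \<longrightarrow> c \<inter> d = {}) \<and> \<Union>C = P"

definition chain_sort :: "('a \<Rightarrow> 'a \<Rightarrow> bool) \<Rightarrow> 'a set set \<Rightarrow> ('a \<Rightarrow> real) \<Rightarrow> ('a \<Rightarrow> real)" where
  "chain_sort le C lab = (\<lambda>x.
     if \<exists>c\<in>C. x \<in> c then
       (let c = (THE c. c \<in> C \<and> x \<in> c) in
         sorted_list_of_multiset (image_mset lab (mset_set c)) ! card {y\<in>c. le y x \<and> y \<noteq> x})
     else lab x)"

definition nondecreasing_on_chains :: "('a \<Rightarrow> 'a \<Rightarrow> bool) \<Rightarrow> 'a set set \<Rightarrow> ('a \<Rightarrow> real) \<Rightarrow> bool" where
  "nondecreasing_on_chains le C lab \<longleftrightarrow>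
     (\<forall>c\<in>C. \<forall>x\<in>c. \<forall>y\<in>c. le x y \<longrightarrow> lab x \<le> lab y)"

definition N2_via :: "'a set \<Rightarrow> ('a \<Rightarrow> 'a \<Rightarrow> bool) \<Rightarrow> 'a set set \<Rightarrow> 'a set set \<Rightarrow> bool" where
  "N2_via P le C1 C2 \<longleftrightarrow> chain_cover P le C1 \<and> chain_cover P le C2 \<and>
     (\<forall>lab :: 'a \<Rightarrow> real.
        nondecreasing_on_chains le C1 (chain_sort le C2 (chain_sort le C1 lab)) \<and>
        nondecreasing_on_chains le C2 (chain_sort le C1 (chain_sort le C2 lab))) \<and>
     (\<forall>x y. covers P le x y \<longrightarrow> (\<exists>c\<in>C1 \<union> C2. x \<in> c \<and> y \<in> c))"

definition N2 :: "'a set \<Rightarrow> ('a \<Rightarrow> 'a \<Rightarrow> bool) \<Rightarrow> bool" where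
  "N2 P le \<longleftrightarrow> (\<exists>C1 C2. N2_via P le C1 C2)"

definition convex_subset :: "'a set \<Rightarrow> ('a \<Rightarrow> 'a \<Rightarrow> bool) \<Rightarrow> 'a set \<Rightarrow> bool" where
  "convex_subset P le Q \<longleftrightarrow> Q \<subseteq> P \<and>
     (\<forall>x\<in>Q. \<forall>y\<in>Q. \<forall>z\<in>P. le x z \<and> le z y \<longrightarrow> z \<in> Q)"

end

theory Submission imports Defs begin


definition lin_on :: "('a \<Rightarrow> 'a \<Rightarrow> bool) \<Rightarrow> 'a set \<Rightarrow> bool" where
  "lin_on le c \<longleftrightarrow> finite c \<and> (\<forall>x\<in>c. \<forall>y\<in>c. le x y \<or> le y x) \<and>
     (\<forall>x\<in>c. \<forall>y\<in>c. le x y \<and> le y x \<longrightarrow> x = y) \<and>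
     (\<forall>x\<in>c. \<forall>y\<in>c. \<forall>z\<in>c. le x y \<and> le y z \<longrightarrow> le x z)"

definition rk :: "('a \<Rightarrow> 'a \<Rightarrow> bool) \<Rightarrow> 'a set \<Rightarrow> 'a \<Rightarrow> nat" where
  "rk le c x = card {y\<in>c. le y x \<and> y \<noteq> x}"

definition srt :: "('a \<Rightarrow> 'a \<Rightarrow> bool) \<Rightarrow> ('a \<Rightarrow> real) \<Rightarrow> 'a set \<Rightarrow> 'a \<Rightarrow> real" where
  "srt le lab c x = sorted_list_of_multiset (image_mset lab (mset_set c)) ! rk le c x"

definition restr :: "'a set \<Rightarrow> 'a set set \<Rightarrow> 'a set set" where
  "restr Q C = {c \<inter> Q | c. c \<in> C \<and> c \<inter> Q \<noteq> {}}"

definition extl :: "'a set \<Rightarrow> ('a \<Rightarrow> 'a \<Rightarrow> bool) \<Rightarrow> real \<Rightarrow> real \<Rightarrow> ('a \<Rightarrow> real) \<Rightarrow> 'a \<Rightarrow> real" where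
  "extl Q le a b f x = (if x \<in> Q then f x else if \<exists>q\<in>Q. le q x then b else a)"

lemma lin_on_subset: "lin_on le c \<Longrightarrow> d \<subseteq> c \<Longrightarrow> lin_on le d"
  unfolding lin_on_def by (meson finite_subset subsetD)

lemma chain_sort_at:
  assumes "c \<in> C" "x \<in> c" "\<forall>c\<in>C. \<forall>d\<in>C. c \<noteq> d \<longrightarrow> c \<inter> d = {}"
  shows "chain_sort le C lab x = srt le lab c x"
proof -
  have "(THE c. c \<in> C \<and> x \<in> c) = c"
    by (rule the_equality) (use assms in auto)
  then show ?thesis using assms unfolding chain_sort_def srt_def rk_def Let_def by auto
qed

lemma rk_less:
  assumes "lin_on le c" "x \<in> c" "y \<in> c" "le x y" "x \<noteq> y"
  shows "rk le c x < rk le c y"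
proof -
  have tr: "\<forall>x\<in>c. \<forall>y\<in>c. \<forall>z\<in>c. le x y \<and> le y z \<longrightarrow> le x z"
    using assms(1) unfolding lin_on_def by (elim conjE)
  have an: "\<forall>x\<in>c. \<forall>y\<in>c. le x y \<and> le y x \<longrightarrow> x = y"
    using assms(1) unfolding lin_on_def by (elim conjE)
  have sub: "{z\<in>c. le z x \<and> z \<noteq> x} \<subseteq> {z\<in>c. le z y \<and> z \<noteq> y}"
  proof
    fix z assume z: "z \<in> {z\<in>c. le z x \<and> z \<noteq> x}"
    then have "le z y" using tr assms(2,3,4) by blast
    moreover have "z \<noteq> y"
    proof
      assume "z = y"
      then have "x = y" using an assms(2,3,4) z by blast
      then show False using assms(5) by simp
    qed
    ultimately show "z \<in> {z\<in>c. le z y \<and> z \<noteq> y}" using z by simp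
  qed
  have "x \<in> {z\<in>c. le z y \<and> z \<noteq> y}" "x \<notin> {z\<in>c. le z x \<and> z \<noteq> x}" using assms by auto
  then have "{z\<in>c. le z x \<and> z \<noteq> x} \<subset> {z\<in>c. le z y \<and> z \<noteq> y}" using sub by blast
  moreover have "finite c" using assms(1) unfolding lin_on_def by (elim conjE)
  ultimately show ?thesis unfolding rk_def by (simp add: psubset_card_mono)
qed

lemma rk_bound:
  assumes "lin_on le c" "x \<in> c"
  shows "rk le c x < card c"
proof -
  have f: "finite c" using assms unfolding lin_on_def by auto
  have "{z\<in>c. le z x \<and> z \<noteq> x} \<subset> c" using assms by auto
  then show ?thesis unfolding rk_def using f by (simp add: psubset_card_mono)
qed

lemma rk_inj: assumes "lin_on le c" shows "inj_on (rk le c) c"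
proof (rule inj_onI)
  fix x y assume "x \<in> c" "y \<in> c" "rk le c x = rk le c y"
  then show "x = y" using rk_less[OF assms, of x y] rk_less[OF assms, of y x] assms
    unfolding lin_on_def by (metis less_irrefl)
qed

lemma rk_image: assumes "lin_on le c" shows "rk le c ` c = {..<card c}"
proof -
  have "rk le c ` c \<subseteq> {..<card c}" using rk_bound[OF assms] by auto
  moreover have "card (rk le c ` c) = card {..<card c}"
    using card_image[OF rk_inj[OF assms]] by simp
  ultimately show ?thesis by (simp add: card_subset_eq)
qed

lemma rk_bij: assumes "lin_on le c" shows "bij_betw (rk le c) c {..<card c}"
  using rk_inj[OF assms] rk_image[OF assms] by (simp add: bij_betw_def)

lemma rk_mono:
  assumes "lin_on le c" "x \<in> c" "y \<in> c" "le x y"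
  shows "rk le c x \<le> rk le c y"
  using rk_less[OF assms] by (cases "x = y") auto

lemma rk_le_imp:
  assumes "lin_on le c" "x \<in> c" "y \<in> c" "rk le c x \<le> rk le c y"
  shows "le x y"
proof (rule ccontr)
  assume "\<not> le x y"
  moreover have "le x y \<or> le y x" using assms(1,2,3) unfolding lin_on_def by blast
  ultimately have "le y x" "y \<noteq> x" by auto
  then have "rk le c y < rk le c x" using rk_less[OF assms(1,3,2)] by auto
  then show False using assms by simp
qed

lemma srt_mono:
  assumes "lin_on le c" "x \<in> c" "y \<in> c" "le x y"
  shows "srt le lab c x \<le> srt le lab c y"
proof -
  let ?S = "sorted_list_of_multiset (image_mset lab (mset_set c))"
  have len: "length ?S = card c"
    by (metis mset_sorted_list_of_multiset size_image_mset size_mset size_mset_set)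
  show ?thesis unfolding srt_def
    using sorted_nth_mono[of ?S "rk le c x" "rk le c y"] rk_mono[OF assms] rk_bound[OF assms(1,3)] len
    by simp
qed

lemma srt_perm:
  assumes "lin_on le c"
  shows "image_mset (srt le lab c) (mset_set c) = image_mset lab (mset_set c)"
proof -
  let ?S = "sorted_list_of_multiset (image_mset lab (mset_set c))"
  have len: "length ?S = card c"
    by (metis mset_sorted_list_of_multiset size_image_mset size_mset size_mset_set)
  have "image_mset (srt le lab c) (mset_set c) = image_mset (nth ?S) (image_mset (rk le c) (mset_set c))"
    unfolding srt_def by (simp add: image_mset.compositionality o_def)
  also have "\<dots> = image_mset (nth ?S) (mset_set {..<card c})"
    using image_mset_mset_set[OF rk_inj[OF assms]] rk_image[OF assms] by simp
  also have "\<dots> = image_mset (nth ?S) (mset [0..<length ?S])"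
    using len by (metis atLeast_upt distinct_upt mset_set_set)
  also have "\<dots> = mset (map (nth ?S) [0..<length ?S])" by simp
  also have "\<dots> = mset ?S" by (simp add: map_nth)
  finally show ?thesis by simp
qed

lemma srt_unique:
  assumes "lin_on le c" "x \<in> c"
    and mono: "\<forall>x\<in>c. \<forall>y\<in>c. le x y \<longrightarrow> g x \<le> g y"
    and ms: "image_mset g (mset_set c) = image_mset lab (mset_set c)"
  shows "g x = srt le lab c x"
proof -
  define e where "e = the_inv_into c (rk le c)"
  define n where "n = card c"
  have bij: "bij_betw e {..<n} c" unfolding e_def n_def
    using bij_betw_the_inv_into[OF rk_bij[OF assms(1)]] .
  have erk: "\<And>i. i < n \<Longrightarrow> rk le c (e i) = i" unfolding e_def n_def
    using f_the_inv_into_f_bij_betw[OF rk_bij[OF assms(1)]] by auto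
  define L where "L = map (g \<circ> e) [0..<n]"
  have sL: "sorted L" unfolding L_def sorted_iff_nth_mono
  proof (intro allI impI)
    fix i j assume ij0: "i \<le> j" "j < length (map (g \<circ> e) [0..<n])"
    then have ij: "i \<le> j \<and> j < length (map (g \<circ> e) [0..<n])" by simp
    then have "i < n" "j < n" by auto
    then have ec: "e i \<in> c" "e j \<in> c" using bij by (auto simp: bij_betw_def)
    have "le (e i) (e j)" using rk_le_imp[OF assms(1) ec] erk \<open>i < n\<close> \<open>j < n\<close> ij by simp
    then show "map (g \<circ> e) [0..<n] ! i \<le> map (g \<circ> e) [0..<n] ! j"
      using mono ec \<open>i < n\<close> \<open>j < n\<close> by simp
  qed
  have "mset L = image_mset g (image_mset e (mset_set {..<n}))"
  proof -
    have "mset [0..<n] = mset_set {..<n}" by (metis atLeast_upt distinct_upt mset_set_set)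
    then show ?thesis unfolding L_def mset_map by (simp add: image_mset.compositionality)
  qed
  also have "\<dots> = image_mset g (mset_set c)"
    using image_mset_mset_set[of e "{..<n}"] bij by (simp add: bij_betw_def)
  finally have mL: "mset L = image_mset lab (mset_set c)" using ms by simp
  have SL: "sorted_list_of_multiset (image_mset lab (mset_set c)) = L"
    using mL[symmetric] sL by (simp add: sorted_list_of_multiset_mset sorted_sort_id)
  have r: "rk le c x < n" using rk_bound[OF assms(1,2)] n_def by simp
  have "e (rk le c x) = x" unfolding e_def
    using the_inv_into_f_f[OF rk_inj[OF assms(1)] assms(2)] .
  then show ?thesis unfolding srt_def SL L_def using r by simp
qed


lemma covers_QP:
  assumes "convex_subset P le Q" "covers Q le x y"
  shows "covers P le x y"
  using assms unfolding convex_subset_def covers_def by blast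

lemma lin_chain:
  assumes "finite P" "is_poset P le" "saturated_chain P le c"
  shows "lin_on le c"
  using assms unfolding lin_on_def is_poset_def saturated_chain_def
  by (meson finite_subset subsetD)

lemma restr_disj:
  assumes "chain_cover P le C"
  shows "\<forall>c\<in>restr Q C. \<forall>d\<in>restr Q C. c \<noteq> d \<longrightarrow> c \<inter> d = {}"
  using assms unfolding restr_def chain_cover_def by blast

lemma cover_disj:
  assumes "chain_cover P le C"
  shows "\<forall>c\<in>C. \<forall>d\<in>C. c \<noteq> d \<longrightarrow> c \<inter> d = {}"
  using assms unfolding chain_cover_def by blast

lemma restr_cover:
  assumes "convex_subset P le Q" "chain_cover P le C"
  shows "chain_cover Q le (restr Q C)"
proof -
  have QP: "Q \<subseteq> P" using assms(1) unfolding convex_subset_def by auto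
  have sat: "saturated_chain Q le (c \<inter> Q)" if "c \<in> C" "c \<inter> Q \<noteq> {}" for c
  proof -
    have sc: "saturated_chain P le c" using assms(2) that unfolding chain_cover_def by auto
    show ?thesis unfolding saturated_chain_def
    proof (intro conjI ballI impI)
      show "c \<inter> Q \<noteq> {}" by fact
      show "c \<inter> Q \<subseteq> Q" by auto
    next
      fix x y assume "x \<in> c \<inter> Q" "y \<in> c \<inter> Q"
      then show "le x y \<or> le y x" using sc unfolding saturated_chain_def by auto
    next
      fix x y assume xy: "x \<in> c \<inter> Q" "y \<in> c \<inter> Q"
        and h: "le x y \<and> x \<noteq> y \<and> \<not> (\<exists>z\<in>c \<inter> Q. le x z \<and> le z y \<and> z \<noteq> x \<and> z \<noteq> y)"
      have "\<not> (\<exists>z\<in>c. le x z \<and> le z y \<and> z \<noteq> x \<and> z \<noteq> y)"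
      proof
        assume "\<exists>z\<in>c. le x z \<and> le z y \<and> z \<noteq> x \<and> z \<noteq> y"
        then obtain z where z: "z \<in> c" "le x z" "le z y" "z \<noteq> x" "z \<noteq> y" by auto
        have "z \<in> P" using sc z unfolding saturated_chain_def by auto
        then have "z \<in> Q" using assms(1) xy z unfolding convex_subset_def by auto
        then show False using h z by auto
      qed
      then have "covers P le x y" using sc xy h unfolding saturated_chain_def by auto
      then show "covers Q le x y" using xy QP unfolding covers_def by auto
    qed
  qed
  show ?thesis unfolding chain_cover_def
  proof (intro conjI)
    show "\<forall>c\<in>restr Q C. saturated_chain Q le c" using sat unfolding restr_def by auto
    show "\<forall>c\<in>restr Q C. \<forall>d\<in>restr Q C. c \<noteq> d \<longrightarrow> c \<inter> d = {}" using restr_disj[OF assms(2)] .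
    show "\<Union> (restr Q C) = Q"
    proof
      show "\<Union> (restr Q C) \<subseteq> Q" unfolding restr_def by auto
      show "Q \<subseteq> \<Union> (restr Q C)"
      proof
        fix x assume "x \<in> Q"
        then have "x \<in> \<Union>C" using QP assms(2) unfolding chain_cover_def by auto
        then obtain c where "c \<in> C" "x \<in> c" by auto
        then show "x \<in> \<Union> (restr Q C)" unfolding restr_def using \<open>x \<in> Q\<close> by auto
      qed
    qed
  qed
qed

lemma restr_mem:
  assumes "c \<in> C" "x \<in> c" "x \<in> Q"
  shows "c \<inter> Q \<in> restr Q C"
  using assms unfolding restr_def by auto

lemma bounds:
  assumes "finite P" "is_poset P le" "convex_subset P le Q" "chain_cover P le C"
    and fb: "\<forall>x\<in>Q. a < f x \<and> f x < b"
  shows "\<forall>x\<in>Q. a < chain_sort le (restr Q C) f x \<and> chain_sort le (restr Q C) f x < b"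
proof
  fix x assume xQ: "x \<in> Q"
  have QP: "Q \<subseteq> P" using assms(3) unfolding convex_subset_def by auto
  obtain c where c: "c \<in> C" "x \<in> c" using xQ QP assms(4) unfolding chain_cover_def by auto
  have sc: "saturated_chain P le c" using assms(4) c(1) unfolding chain_cover_def by blast
  have lin: "lin_on le (c \<inter> Q)"
    by (rule lin_on_subset[OF lin_chain[OF assms(1,2) sc]]) auto
  have eq: "chain_sort le (restr Q C) f x = srt le f (c \<inter> Q) x"
    using chain_sort_at[OF restr_mem[OF c xQ] _ restr_disj[OF assms(4)]] c xQ by auto
  have fin: "finite (c \<inter> Q)" using lin unfolding lin_on_def by auto
  have xm: "x \<in># mset_set (c \<inter> Q)" using c xQ fin by simp
  have "srt le f (c \<inter> Q) x \<in># image_mset (srt le f (c \<inter> Q)) (mset_set (c \<inter> Q))"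
    using xm by (simp only: set_image_mset) (rule imageI)
  then have "srt le f (c \<inter> Q) x \<in># image_mset f (mset_set (c \<inter> Q))" using srt_perm[OF lin] by simp
  then have "srt le f (c \<inter> Q) x \<in> f ` (c \<inter> Q)" using fin by (simp only: set_image_mset finite_set_mset_mset_set)
  then obtain y where "y \<in> c \<inter> Q" "srt le f (c \<inter> Q) x = f y" by blast
  then show "a < chain_sort le (restr Q C) f x \<and> chain_sort le (restr Q C) f x < b"
    using eq fb by auto
qed



lemma K:
  assumes fin: "finite P" and po: "is_poset P le" and cv: "convex_subset P le Q"
    and cc: "chain_cover P le C" and ab: "a \<le> b"
    and fb: "\<forall>x\<in>Q. a < f x \<and> f x < b"
  shows "chain_sort le C (extl Q le a b f) = extl Q le a b (chain_sort le (restr Q C) f)"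
proof
  fix x
  let ?s = "chain_sort le (restr Q C) f"
  let ?g = "extl Q le a b ?s"
  have QP: "Q \<subseteq> P" using cv unfolding convex_subset_def by auto
  have sb: "\<forall>x\<in>Q. a < ?s x \<and> ?s x < b" using bounds[OF fin po cv cc fb] .
  show "chain_sort le C (extl Q le a b f) x = ?g x"
  proof (cases "x \<in> P")
    case False
    then have "\<not> (\<exists>c\<in>C. x \<in> c)" using cc unfolding chain_cover_def by auto
    then show ?thesis using False QP unfolding chain_sort_def extl_def by auto
  next
    case True
    then obtain c where c: "c \<in> C" "x \<in> c" using cc unfolding chain_cover_def by auto
    have cP: "c \<subseteq> P" using cc c(1) unfolding chain_cover_def by blast
    have sc: "saturated_chain P le c" using cc c(1) unfolding chain_cover_def by blast
    have lin: "lin_on le c" by (rule lin_chain[OF fin po sc])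
    have linQ: "lin_on le (c \<inter> Q)" by (rule lin_on_subset[OF lin]) auto
    have finc: "finite c" using lin unfolding lin_on_def by auto
    have sQ: "?s y = srt le f (c \<inter> Q) y" if "y \<in> c" "y \<in> Q" for y
      using chain_sort_at[OF restr_mem[OF c(1) that] _ restr_disj[OF cc]] that by auto
    have mono: "\<forall>x\<in>c. \<forall>y\<in>c. le x y \<longrightarrow> ?g x \<le> ?g y"
    proof (intro ballI impI)
      fix x y assume xy: "x \<in> c" "y \<in> c" "le x y"
      show "?g x \<le> ?g y"
      proof (cases "x \<in> Q")
        case xQ: True
        show ?thesis
        proof (cases "y \<in> Q")
          case True
          have gx: "?g x = srt le f (c \<inter> Q) x" using sQ xQ xy(1) unfolding extl_def by simp
          have gy: "?g y = srt le f (c \<inter> Q) y" using sQ True xy(2) unfolding extl_def by simp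
          have "srt le f (c \<inter> Q) x \<le> srt le f (c \<inter> Q) y"
            using srt_mono[OF linQ, of x y f] xQ True xy by blast
          then show ?thesis using gx gy by simp
        next
          case False
          have gy: "?g y = b" using False xQ xy(3) unfolding extl_def by auto
          have gx: "?g x = ?s x" using xQ unfolding extl_def by simp
          have "?s x < b" using sb xQ by blast
          then show ?thesis using gx gy by simp
        qed
      next
        case xQ: False
        show ?thesis
        proof (cases "y \<in> Q")
          case yQ: True
          have "\<not> (\<exists>q\<in>Q. le q x)"
          proof
            assume "\<exists>q\<in>Q. le q x"
            then obtain q where "q \<in> Q" "le q x" by auto
            moreover have "\<forall>x\<in>Q. \<forall>y\<in>Q. \<forall>z\<in>P. le x z \<and> le z y \<longrightarrow> z \<in> Q"
              using cv unfolding convex_subset_def by blast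
            moreover have "x \<in> P" using cP xy(1) by blast
            ultimately have "x \<in> Q" using yQ xy(3) by blast
            then show False using xQ by simp
          qed
          then have gx: "?g x = a" using xQ unfolding extl_def by simp
          have gy: "?g y = ?s y" using yQ unfolding extl_def by simp
          have "a < ?s y" using sb yQ by blast
          then show ?thesis using gx gy by simp
        next
          case yQ: False
          have hq: "\<exists>q\<in>Q. le q y" if h: "\<exists>q\<in>Q. le q x"
          proof -
            obtain q where "q \<in> Q" "le q x" using h by auto
            moreover have "\<forall>x\<in>P. \<forall>y\<in>P. \<forall>z\<in>P. le x y \<and> le y z \<longrightarrow> le x z"
              using po unfolding is_poset_def by blast
            moreover have "x \<in> P" "y \<in> P" using cP xy(1,2) by auto
            ultimately have "le q y" using QP xy(3) by blast
            then show ?thesis using \<open>q \<in> Q\<close> by auto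
          qed
          show ?thesis
          proof (cases "\<exists>q\<in>Q. le q x")
            case True
            then have "?g x = b" "?g y = b" using xQ yQ hq
              unfolding extl_def by simp_all
            then show ?thesis by simp
          next
            case False
            then have "?g x = a" using xQ unfolding extl_def by simp
            moreover have "?g y = a \<or> ?g y = b" using yQ unfolding extl_def by simp
            ultimately show ?thesis using ab by auto
          qed
        qed
      qed
    qed
    have split: "mset_set c = mset_set (c \<inter> Q) + mset_set (c - Q)"
    proof -
      have "c = (c \<inter> Q) \<union> (c - Q)" by auto
      then show ?thesis using mset_set_Union[of "c \<inter> Q" "c - Q"] finc by (metis Diff_disjoint Int_Diff_disjoint finite_Diff finite_Int inf_commute)
    qed
    have m1: "image_mset ?g (mset_set (c - Q)) = image_mset (extl Q le a b f) (mset_set (c - Q))"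
      by (rule image_mset_cong) (use finc in \<open>simp add: extl_def\<close>)
    have m2: "image_mset ?g (mset_set (c \<inter> Q)) = image_mset (extl Q le a b f) (mset_set (c \<inter> Q))"
    proof -
      have "image_mset ?g (mset_set (c \<inter> Q)) = image_mset (srt le f (c \<inter> Q)) (mset_set (c \<inter> Q))"
        by (rule image_mset_cong) (use finc sQ in \<open>auto simp: extl_def\<close>)
      also have "\<dots> = image_mset f (mset_set (c \<inter> Q))" using srt_perm[OF linQ] .
      also have "\<dots> = image_mset (extl Q le a b f) (mset_set (c \<inter> Q))"
        by (rule image_mset_cong) (use finc in \<open>auto simp: extl_def\<close>)
      finally show ?thesis .
    qed
    have ms: "image_mset ?g (mset_set c) = image_mset (extl Q le a b f) (mset_set c)"
      using m1 m2 split by simp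
    have "?g x = srt le (extl Q le a b f) c x" using srt_unique[OF lin c(2) mono ms] .
    then show ?thesis using chain_sort_at[OF c cover_disj[OF cc]] by simp
  qed
qed

lemma transfer:
  assumes fin: "finite P" and po: "is_poset P le" and cv: "convex_subset P le Q"
    and c1: "chain_cover P le C1" and c2: "chain_cover P le C2"
    and nd: "\<forall>lab. nondecreasing_on_chains le C1 (chain_sort le C2 (chain_sort le C1 lab))"
  shows "nondecreasing_on_chains le (restr Q C1) (chain_sort le (restr Q C2) (chain_sort le (restr Q C1) lab))"
proof (cases "Q = {}")
  case True
  then show ?thesis unfolding nondecreasing_on_chains_def restr_def by auto
next
  case False
  have QP: "Q \<subseteq> P" using cv unfolding convex_subset_def by auto
  have finQ: "finite Q" using QP fin finite_subset by auto
  define a where "a = Min (lab ` Q) - 1"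
  define b where "b = Max (lab ` Q) + 1"
  have ab: "a \<le> b" unfolding a_def b_def using False finQ
    by (smt (verit) Max_ge Min_le all_not_in_conv finite_imageI imageI)
  have fb: "\<forall>x\<in>Q. a < lab x \<and> lab x < b" unfolding a_def b_def using finQ
    by (smt (verit) Max_ge Min_le finite_imageI imageI)
  let ?s1 = "chain_sort le (restr Q C1) lab"
  let ?s2 = "chain_sort le (restr Q C2) ?s1"
  have fb1: "\<forall>x\<in>Q. a < ?s1 x \<and> ?s1 x < b" using bounds[OF fin po cv c1 fb] .
  have "chain_sort le C2 (chain_sort le C1 (extl Q le a b lab)) = extl Q le a b ?s2"
    using K[OF fin po cv c1 ab fb] K[OF fin po cv c2 ab fb1] by simp
  then have nd2: "nondecreasing_on_chains le C1 (extl Q le a b ?s2)" using nd by metis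
  show ?thesis unfolding nondecreasing_on_chains_def
  proof (intro ballI impI)
    fix c' x y assume c': "c' \<in> restr Q C1" and xy: "x \<in> c'" "y \<in> c'" "le x y"
    then obtain c where c: "c \<in> C1" "c' = c \<inter> Q" unfolding restr_def by auto
    then have xc: "x \<in> c" "y \<in> c" "x \<in> Q" "y \<in> Q" using xy by auto
    have "extl Q le a b ?s2 x \<le> extl Q le a b ?s2 y"
      using nd2 c(1) xc(1,2) xy(3) unfolding nondecreasing_on_chains_def by blast
    then show "?s2 x \<le> ?s2 y" using xc(3,4) unfolding extl_def by simp
  qed
qed

theorem theorem2p1:
  fixes P Q :: "'a set" and le :: "'a \<Rightarrow> 'a \<Rightarrow> bool"
  assumes "finite P"
    and "is_poset P le"
    and "N2 P le"
    and "convex_subset P le Q"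
  shows "N2 Q le"
proof -
  obtain C1 C2 where v: "N2_via P le C1 C2" using assms(3) unfolding N2_def by blast
  note vv = v[unfolded N2_via_def]
  have c1: "chain_cover P le C1" using vv by (rule conjunct1)
  have c2: "chain_cover P le C2" using vv[THEN conjunct2] by (rule conjunct1)
  have s12: "\<forall>lab :: 'a \<Rightarrow> real.
        nondecreasing_on_chains le C1 (chain_sort le C2 (chain_sort le C1 lab)) \<and>
        nondecreasing_on_chains le C2 (chain_sort le C1 (chain_sort le C2 lab))"
    using vv[THEN conjunct2, THEN conjunct2] by (rule conjunct1)
  have ed: "\<forall>x y. covers P le x y \<longrightarrow> (\<exists>c\<in>C1 \<union> C2. x \<in> c \<and> y \<in> c)"
    using vv[THEN conjunct2, THEN conjunct2] by (rule conjunct2)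
  have n1: "\<forall>lab. nondecreasing_on_chains le C1 (chain_sort le C2 (chain_sort le C1 lab))"
  proof
    fix lab :: "'a \<Rightarrow> real"
    show "nondecreasing_on_chains le C1 (chain_sort le C2 (chain_sort le C1 lab))"
      using spec[OF s12, of lab] by (rule conjunct1)
  qed
  have n2: "\<forall>lab. nondecreasing_on_chains le C2 (chain_sort le C1 (chain_sort le C2 lab))"
  proof
    fix lab :: "'a \<Rightarrow> real"
    show "nondecreasing_on_chains le C2 (chain_sort le C1 (chain_sort le C2 lab))"
      using spec[OF s12, of lab] by (rule conjunct2)
  qed
  have "N2_via Q le (restr Q C1) (restr Q C2)" unfolding N2_via_def
  proof (intro conjI allI impI)
    show "chain_cover Q le (restr Q C1)" using restr_cover[OF assms(4) c1] .
    show "chain_cover Q le (restr Q C2)" using restr_cover[OF assms(4) c2] .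
  next
    fix lab :: "'a \<Rightarrow> real"
    show "nondecreasing_on_chains le (restr Q C1) (chain_sort le (restr Q C2) (chain_sort le (restr Q C1) lab))"
      by (rule transfer[OF assms(1,2,4) c1 c2 n1])
    show "nondecreasing_on_chains le (restr Q C2) (chain_sort le (restr Q C1) (chain_sort le (restr Q C2) lab))"
      by (rule transfer[OF assms(1,2,4) c2 c1 n2])
  next
    fix x y assume cq: "covers Q le x y"
    then have "covers P le x y" by (rule covers_QP[OF assms(4)])
    then have "\<exists>c\<in>C1 \<union> C2. x \<in> c \<and> y \<in> c" using ed by blast
    then obtain c where c: "c \<in> C1 \<union> C2" "x \<in> c" "y \<in> c" by blast
    have xQ: "x \<in> Q" and yQ: "y \<in> Q" using cq unfolding covers_def by auto
    show "\<exists>c\<in>restr Q C1 \<union> restr Q C2. x \<in> c \<and> y \<in> c"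
    proof (cases "c \<in> C1")
      case True
      then have "c \<inter> Q \<in> restr Q C1" using restr_mem c(2) xQ by metis
      then have m: "c \<inter> Q \<in> restr Q C1 \<union> restr Q C2" by (rule UnI1)
      have "x \<in> c \<inter> Q \<and> y \<in> c \<inter> Q" using c xQ yQ by simp
      then show ?thesis using m by (rule bexI)
    next
      case False
      then have "c \<in> C2" using c(1) by blast
      then have "c \<inter> Q \<in> restr Q C2" using restr_mem c(2) xQ by metis
      then have m: "c \<inter> Q \<in> restr Q C1 \<union> restr Q C2" by (rule UnI2)
      have "x \<in> c \<inter> Q \<and> y \<in> c \<inter> Q" using c xQ yQ by simp
      then show ?thesis using m by (rule bexI)
    qed
  qed
  then show ?thesis unfolding N2_def by (intro exI)
qed

end
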